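(* Let $q\in\mathbb{C}$ with $|q|<1$, $r\in\mathbb{N}$, $w_1,\dots,w_r>0$, $a_1,\dots,a_r\in\mathbb{C}$, $x\in\mathbb{C}$ with $\Re(x)>0$, and let $\chi$ be a Dirichlet character with conductor $f\in\mathbb{N}$, $f$ odd. Define $E_{n,\chi,q}^{(r)}(x|w_1,\dots,w_r;a_1,\dots,a_r)$ by $$2^r\sum_{m_1,\dots,m_r=0}^{\infty}\Big(\prod_{j=1}^r\chi(m_j)\Big)(-1)^{m_1+\cdots+m_r}q^{a_1m_1+\cdots+a_rm_r}e^{[x+\sum_{j=1}^r w_jm_j]_q t}=\sum_{n=0}^{\infty}E_{n,\chi,q}^{(r)}(x|w_1,\dots,w_r;a_1,\dots,a_r)\frac{t^n}{n!},$$ and the Barnes-type multiple $q$-$l$-function by $$l_{q,\chi}^{(r)}(s,x|w_1,\dots,w_r;a_1,\dots,a_r)=2^r\sum_{m_1,\dots,m_r=0}^{\infty}\frac{\Big(\prod_{j=1}^r\chi(m_j)\Big)(-1)^{m_1+\cdots+m_r}q^{m_1a_1+\cdots+m_ra_r}}{[x+w_1m_1+\cdots+w_rm_r]_q^s},\quad s\in\mathbb{C}$$ (extended meromorphically to the whole $s$-plane). Then for every integer $n\ge 0$, $$l_{q,\chi}^{(r)}(-n,x|w_1,\dots,w_r;a_1,\dots,a_r)=E_{n,\chi,q}^{(r)}(x|w_1,\dots,w_r;a_1,\dots,a_r).$$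
   Context: For complex $q$ with $|q|<1$, $[y]_q=\frac{1-q^y}{1-q}$, and $[y]_q^{s}$ denotes a complex power of $[y]_q$.
   Formalization: q is nonzero, $|q^{a_j}|<1$ for each j, $[x+w_1m_1+\cdots+w_rm_r]_q$ is nonzero for all $m_1,\dots,m_r$, and the continuation of l is taken as an entire function agreeing with the series on a nonempty open set. Apart from conventions, each condition added here is assumed in the paper as well or is needed for the statement above to hold. *)

theory Defs
  imports "HOL-Complex_Analysis.Complex_Analysis" "HOL-Number_Theory.Number_Theory"
begin

definition qint :: "complex \<Rightarrow> complex \<Rightarrow> complex" where
  "qint q y = (1 - q powr y) / (1 - q)"

definition dirichlet_character :: "nat \<Rightarrow> (nat \<Rightarrow> complex) \<Rightarrow> bool" where
  "dirichlet_character k chi \<longleftrightarrow> k > 0 \<and> chi 1 = 1 \<and>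
     (\<forall>m n. chi (m * n) = chi m * chi n) \<and>
     (\<forall>m. chi (m + k) = chi m) \<and>
     (\<forall>m. chi m = 0 \<longleftrightarrow> \<not> coprime m k)"

definition induced_modulus :: "nat \<Rightarrow> (nat \<Rightarrow> complex) \<Rightarrow> nat \<Rightarrow> bool" where
  "induced_modulus k chi d \<longleftrightarrow> d dvd k \<and>
     (\<forall>m n. coprime m k \<longrightarrow> coprime n k \<longrightarrow> [m = n] (mod d) \<longrightarrow> chi m = chi n)"

definition conductor :: "nat \<Rightarrow> (nat \<Rightarrow> complex) \<Rightarrow> nat" where
  "conductor k chi = (LEAST d. d > 0 \<and> induced_modulus k chi d)"

definition multi_idx :: "nat \<Rightarrow> (nat \<Rightarrow> nat) set" where
  "multi_idx r = {..<r} \<rightarrow>\<^sub>E (UNIV :: nat set)"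

definition barnes_coeff ::
  "complex \<Rightarrow> (nat \<Rightarrow> complex) \<Rightarrow> nat \<Rightarrow> (nat \<Rightarrow> complex) \<Rightarrow> (nat \<Rightarrow> nat) \<Rightarrow> complex" where
  "barnes_coeff q chi r a m = 2 ^ r * (\<Prod>j<r. chi (m j)) * (-1) ^ (\<Sum>j<r. m j)
      * q powr (\<Sum>j<r. a j * of_nat (m j))"

definition barnes_arg :: "complex \<Rightarrow> nat \<Rightarrow> (nat \<Rightarrow> real) \<Rightarrow> (nat \<Rightarrow> nat) \<Rightarrow> complex" where
  "barnes_arg x r w m = x + (\<Sum>j<r. complex_of_real (w j) * of_nat (m j))"

definition barnes_gen ::
  "complex \<Rightarrow> (nat \<Rightarrow> complex) \<Rightarrow> nat \<Rightarrow> (nat \<Rightarrow> real) \<Rightarrow> (nat \<Rightarrow> complex) \<Rightarrow> complex \<Rightarrow> complex \<Rightarrow> complex" where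
  "barnes_gen q chi r w a x t =
     infsum (\<lambda>m. barnes_coeff q chi r a m * exp (qint q (barnes_arg x r w m) * t)) (multi_idx r)"

definition barnes_l_series ::
  "complex \<Rightarrow> (nat \<Rightarrow> complex) \<Rightarrow> nat \<Rightarrow> (nat \<Rightarrow> real) \<Rightarrow> (nat \<Rightarrow> complex) \<Rightarrow> complex \<Rightarrow> complex \<Rightarrow> complex" where
  "barnes_l_series q chi r w a x s =
     infsum (\<lambda>m. barnes_coeff q chi r a m / (qint q (barnes_arg x r w m)) powr s) (multi_idx r)"

end

theory Submission
  imports Defs
begin

lemma exp_has_sum_real:
  fixes x :: real assumes "x \<ge> 0"
  shows "((\<lambda>k. x ^ k / fact k) has_sum exp x) UNIV"
proof -
  have "(\<lambda>k. x ^ k / fact k) sums exp x"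
    using exp_converges[of x] by (simp add: divide_inverse mult.commute)
  then show ?thesis using assms by (intro sums_nonneg_imp_has_sum) auto
qed

lemma exp_has_sum_complex:
  fixes z :: complex
  shows "((\<lambda>k. z ^ k / fact k) has_sum exp z) UNIV"
proof -
  have "(\<lambda>k. z ^ k / fact k) sums exp z"
    using exp_converges[of z] by (simp add: scaleR_conv_of_real divide_inverse mult.commute)
  moreover have "summable (\<lambda>k. norm (z ^ k / fact k))"
    using exp_converges[of "norm z"] sums_summable
    by (simp add: norm_divide norm_power divide_inverse mult.commute norm_mult norm_inverse)
  ultimately show ?thesis by (intro norm_summable_imp_has_sum) auto
qed

lemma core:
  fixes c u :: "'i \<Rightarrow> complex" and M :: "'i set" and B :: real and t :: complex
  assumes c: "(\<lambda>m. norm (c m)) summable_on M" and u: "\<forall>m\<in>M. norm (u m) \<le> B"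
  shows "(\<lambda>k. infsum (\<lambda>m. c m * u m ^ k) M * t ^ k / fact k) sums
           infsum (\<lambda>m. c m * exp (u m * t)) M"
proof -
  define F where "F = (\<lambda>(m,k). c m * ((u m * t) ^ k / fact k))"
  have nF: "norm (F (m,k)) = norm (c m) * (norm (u m * t) ^ k / fact k)" for m k
    by (simp add: F_def norm_mult norm_divide norm_power)
  have absF: "(\<lambda>p. norm (F p)) summable_on (M \<times> UNIV)"
  proof (rule iffD2[OF Infinite_Sum.abs_summable_on_Sigma_iff], intro conjI ballI)
    fix m assume "m \<in> M"
    show "(\<lambda>k. norm (F (m, k))) summable_on UNIV"
      unfolding nF
      using exp_has_sum_real[of "norm (u m * t)"]
      by (intro summable_on_cmult_right) (auto simp: summable_on_def)
  next
    have eq: "infsum (\<lambda>k. norm (F (m, k))) UNIV = norm (c m) * exp (norm (u m * t))" for m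
      unfolding nF by (subst infsum_cmult_right') (use exp_has_sum_real[of "norm (u m * t)"] infsumI in auto)
    show "(\<lambda>m. norm (infsum (\<lambda>k. norm (F (m, k))) UNIV)) summable_on M"
      unfolding eq
    proof (rule Infinite_Sum.abs_summable_on_comparison_test)
      show "(\<lambda>m. norm (norm (c m) * exp (B * norm t))) summable_on M"
        using c by (auto intro: summable_on_cmult_left)
      fix m assume "m \<in> M"
      then have "norm (u m * t) \<le> B * norm t"
        using u by (simp add: norm_mult mult_right_mono)
      then show "norm (norm (c m) * exp (norm (u m * t))) \<le> norm (norm (c m) * exp (B * norm t))"
        by (simp add: mult_left_mono)
    qed
  qed
  then have sF: "F summable_on (M \<times> UNIV)" by (rule abs_summable_summable)
  have "((\<lambda>m. c m * exp (u m * t)) has_sum infsum F (M \<times> UNIV)) M"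
  proof (rule has_sum_SigmaD)
    show "(F has_sum infsum F (M \<times> UNIV)) (M \<times> UNIV)" using sF by simp
    fix m assume "m \<in> M"
    show "((\<lambda>k. F (m, k)) has_sum c m * exp (u m * t)) UNIV"
      unfolding F_def using has_sum_cmult_right[OF exp_has_sum_complex[of "u m * t"], of "c m"]
      by simp
  qed
  then have I1: "infsum (\<lambda>m. c m * exp (u m * t)) M = infsum F (M \<times> UNIV)"
    by (simp add: infsumI)
  define F' where "F' = (\<lambda>(k,m). F (m,k))"
  have hF': "(F' has_sum infsum F (M \<times> UNIV)) (UNIV \<times> M)"
    using sF has_sum_swap[where f=F and S="infsum F (M \<times> UNIV)" and A=M and B="UNIV::nat set"]
    by (simp add: F'_def case_prod_unfold)
  have "((\<lambda>k. infsum (\<lambda>m. c m * u m ^ k) M * t ^ k / fact k) has_sum infsum F (M \<times> UNIV)) UNIV"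
  proof (rule has_sum_SigmaD[OF hF'])
    fix k :: nat
    have "(\<lambda>m. norm (c m * u m ^ k)) summable_on M"
    proof (rule Infinite_Sum.abs_summable_on_comparison_test)
      show "(\<lambda>m. norm (norm (c m) * \<bar>B\<bar> ^ k)) summable_on M"
        using c by (auto simp: abs_mult power_abs intro: summable_on_cmult_left)
      fix m assume "m \<in> M"
      then have "norm (u m) ^ k \<le> \<bar>B\<bar> ^ k" using u by (intro power_mono) auto
      then show "norm (c m * u m ^ k) \<le> norm (norm (c m) * \<bar>B\<bar> ^ k)"
        by (simp add: norm_mult norm_power mult_left_mono abs_mult power_abs)
    qed
    then have "(\<lambda>m. c m * u m ^ k) summable_on M" by (rule abs_summable_summable)
    then have "((\<lambda>m. c m * u m ^ k * (t ^ k / fact k)) has_sum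
               infsum (\<lambda>m. c m * u m ^ k) M * (t ^ k / fact k)) M"
      by (intro has_sum_cmult_left) simp
    then show "((\<lambda>m. F' (k, m)) has_sum infsum (\<lambda>m. c m * u m ^ k) M * t ^ k / fact k) M"
      by (simp add: F'_def F_def power_mult_distrib mult.assoc)
  qed
  then show ?thesis using I1 by (simp add: has_sum_imp_sums)
qed

lemma powser_unique:
  fixes a b :: "nat \<Rightarrow> complex"
  assumes A: "\<forall>\<^sub>F t in nhds 0. (\<lambda>k. a k * t ^ k) sums g t"
    and B: "\<And>t. (\<lambda>k. b k * t ^ k) sums g t"
  shows "a n = b n"
proof -
  obtain e where e: "e > 0" "\<And>t. t \<in> ball 0 e \<Longrightarrow> (\<lambda>k. a k * t ^ k) sums g t"
    using A unfolding eventually_nhds_metric by (auto simp: dist_commute ball_def)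
  define d where "d k = a k - b k" for k
  have D: "(\<lambda>k. d k * t ^ k) sums 0" if "norm t < e" for t
  proof -
    have "(\<lambda>k. a k * t ^ k - b k * t ^ k) sums (g t - g t)"
      using e(2)[of t] B[of t] that by (intro sums_diff) auto
    then show ?thesis by (simp add: d_def algebra_simps)
  qed
  have d0: "d 0 = 0"
    using D[of 0] powser_sums_zero[of d] e(1) sums_unique2 by auto
  show ?thesis
  proof (rule ccontr)
    assume "a n \<noteq> b n"
    then have dn: "d n \<noteq> 0" by (simp add: d_def)
    with d0 have "n > 0" by (cases n) auto
    show False
    proof (rule powser_0_nonzero[of e 0 d "\<lambda>_. 0" n])
      fix s :: real assume s: "0 < s" "\<And>z::complex. z \<in> cball 0 s - {0} \<Longrightarrow> (\<lambda>_. 0::complex) z \<noteq> 0"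
      have "complex_of_real s \<in> cball 0 s - {0}" using s(1) by auto
      then show False using s(2)[of "complex_of_real s"] by simp
    qed (use e(1) D dn \<open>n > 0\<close> in auto)
  qed
qed

lemma norm_Ln_bound:
  fixes z :: complex and d Z :: real
  assumes "z \<noteq> 0" "d > 0" "d \<le> norm z" "norm z \<le> Z"
  shows "norm (Ln z) \<le> \<bar>ln d\<bar> + \<bar>ln Z\<bar> + pi"
proof -
  have "norm (Ln z) \<le> \<bar>Re (Ln z)\<bar> + \<bar>Im (Ln z)\<bar>" by (rule cmod_le)
  also have "\<bar>Im (Ln z)\<bar> \<le> pi" using mpi_less_Im_Ln[of z] Im_Ln_le_pi[of z] assms(1) by auto
  also have "\<bar>Re (Ln z)\<bar> = \<bar>ln (norm z)\<bar>" using assms(1) by (simp add: Re_Ln)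
  also have "\<bar>ln (norm z)\<bar> \<le> \<bar>ln d\<bar> + \<bar>ln Z\<bar>"
  proof -
    have "ln d \<le> ln (norm z)" using assms by simp
    moreover have "ln (norm z) \<le> ln Z" using assms by (subst ln_le_cancel_iff) auto
    ultimately show ?thesis by linarith
  qed
  finally show ?thesis by simp
qed

lemma chi_bound:
  assumes "dirichlet_character f chi"
  shows "norm (chi n) \<le> 1 + (\<Sum>i<f. norm (chi i))"
proof -
  from assms have f: "f > 0" and per: "\<And>m. chi (m + f) = chi m"
    by (auto simp: dirichlet_character_def)
  have "chi (i + k * f) = chi i" for i k
  proof (induction k)
    case (Suc k)
    have "chi (i + Suc k * f) = chi ((i + k * f) + f)" by (simp add: algebra_simps)
    then show ?case using Suc per by simp
  qed simp
  from this[of "n mod f" "n div f"] have "chi n = chi (n mod f)"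
    by (simp add: mod_div_mult_eq)
  moreover have "norm (chi (n mod f)) \<le> (\<Sum>i<f. norm (chi i))"
    using f by (intro member_le_sum) auto
  ultimately show ?thesis by simp
qed

lemma powr_sum_nat:
  fixes q :: complex and r :: nat assumes "q \<noteq> 0"
  shows "q powr (\<Sum>j<r. a j * of_nat (m j)) = (\<Prod>j<r. (q powr a j) ^ m j)"
proof -
  have "q powr (\<Sum>j<r. a j * of_nat (m j)) = (\<Prod>j<r. exp (of_nat (m j) * (a j * ln q)))"
    unfolding powr_def using assms by (simp add: sum_distrib_left exp_sum[OF finite_lessThan] mult_ac del: exp_sum)
  also have "\<dots> = (\<Prod>j<r. (q powr a j) ^ m j)"
    using assms by (intro prod.cong refl) (simp add: powr_def exp_of_nat_mult)
  finally show ?thesis .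
qed

lemma coeff_summable:
  assumes q: "q \<noteq> 0" and conv: "\<forall>j<r. norm (q powr a j) < 1"
    and chi: "dirichlet_character f chi"
  shows "(\<lambda>m. norm (barnes_coeff q chi r a m)) summable_on multi_idx r"
proof -
  define Bc where "Bc = 1 + (\<Sum>i<f. norm (chi i))"
  have Bc: "\<And>n. norm (chi n) \<le> Bc" using chi_bound[OF chi] by (simp add: Bc_def)
  have Bc1: "Bc \<ge> 1" unfolding Bc_def by (simp add: sum_nonneg)
  define \<rho> where "\<rho> j = norm (q powr a j)" for j
  define G where "G m = (\<Prod>j<r. Bc * \<rho> j ^ m j)" for m :: "nat \<Rightarrow> nat"
  have geo: "((\<lambda>k. Bc * \<rho> j ^ k) has_sum Bc / (1 - \<rho> j)) UNIV" if "j < r" for j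
  proof -
    have "(\<lambda>k. \<rho> j ^ k) sums (1 / (1 - \<rho> j))"
      using geometric_sums[of "\<rho> j"] conv that by (simp add: \<rho>_def)
    then have "(\<lambda>k. Bc * \<rho> j ^ k) sums (Bc * (1 / (1 - \<rho> j)))" by (rule sums_mult)
    then show ?thesis using Bc1 by (intro sums_nonneg_imp_has_sum) (auto simp: \<rho>_def)
  qed
  have "infsum G (PiE {..<r} (\<lambda>_. UNIV)) = (\<Prod>j<r. infsum (\<lambda>k. Bc * \<rho> j ^ k) UNIV)"
    unfolding G_def
  proof (rule infsum_prod_PiE_abs)
    fix j assume "j \<in> {..<r}"
    then show "(\<lambda>k. norm (Bc * \<rho> j ^ k)) summable_on UNIV"
      using geo[of j] Bc1 by (auto simp: summable_on_def \<rho>_def abs_mult)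
  qed simp
  also have "\<dots> = (\<Prod>j<r. Bc / (1 - \<rho> j))"
    using geo by (intro prod.cong refl) (auto intro: infsumI)
  also have "\<dots> > 0"
    using conv Bc1 by (intro prod_pos) (auto simp: \<rho>_def)
  finally have "G summable_on multi_idx r"
    unfolding multi_idx_def using infsum_not_exists by force
  moreover have Gnn: "G m \<ge> 0" for m using Bc1 by (simp add: G_def prod_nonneg \<rho>_def)
  ultimately have sG: "(\<lambda>m. norm (2 ^ r * G m)) summable_on multi_idx r"
    by (simp add: summable_on_cmult_right)
  show ?thesis
  proof (rule Infinite_Sum.abs_summable_on_comparison_test[OF sG])
    fix m assume "m \<in> multi_idx r"
    have "norm (barnes_coeff q chi r a m) = 2 ^ r * ((\<Prod>j<r. norm (chi (m j))) * (\<Prod>j<r. \<rho> j ^ m j))"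
      by (simp add: barnes_coeff_def powr_sum_nat[OF q] norm_mult prod_norm[symmetric] norm_power \<rho>_def)
    also have "\<dots> = 2 ^ r * (\<Prod>j<r. norm (chi (m j)) * \<rho> j ^ m j)"
      by (simp add: prod.distrib)
    also have "\<dots> \<le> 2 ^ r * G m"
      unfolding G_def by (intro mult_left_mono prod_mono) (auto simp: Bc \<rho>_def mult_right_mono)
    also have "\<dots> \<le> norm (2 ^ r * G m)" by simp
    finally show "norm (barnes_coeff q chi r a m) \<le> norm (2 ^ r * G m)" by simp
  qed
qed

lemma z_bounds:
  fixes q x :: complex and r :: nat and w :: "nat \<Rightarrow> real"
  assumes q: "norm q < 1" "q \<noteq> 0" and w: "\<forall>j<r. w j > 0" and x: "Re x > 0"
    and nz: "\<forall>m\<in>multi_idx r. qint q (barnes_arg x r w m) \<noteq> 0"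
  obtains Z d where "d > 0" "\<forall>m\<in>multi_idx r. d \<le> norm (qint q (barnes_arg x r w m)) \<and>
      norm (qint q (barnes_arg x r w m)) \<le> Z"
proof -
  define M where "M = multi_idx r"
  define z where "z m = qint q (barnes_arg x r w m)" for m
  define K where "K = exp (- Im x * Arg q)"
  define S where "S m = (\<Sum>j<r. w j * real (m j))" for m :: "nat \<Rightarrow> nat"
  have K: "K > 0" by (simp add: K_def)
  have nq: "0 < norm q" using q by simp
  have q1: "norm (1 - q) > 0" using q by auto
  have Snn: "S m \<ge> 0" for m using w by (auto simp: S_def intro!: sum_nonneg)
  have py: "norm (q powr barnes_arg x r w m) = norm q powr (Re x + S m) * K" for m
    by (simp add: norm_powr_complex barnes_arg_def S_def K_def Re_sum Im_sum)
  have pbT: "norm (q powr barnes_arg x r w m) \<le> K * norm q powr T" if "T \<le> Re x + S m" for m T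
    using py[of m] powr_mono'[OF that, of "norm q"] q K by (simp add: mult.commute)
  have zeq: "norm (z m) = norm (1 - q powr barnes_arg x r w m) / norm (1 - q)" for m
    by (simp add: z_def qint_def norm_divide)
  define Z where "Z = (1 + K) / norm (1 - q)"
  have up: "norm (z m) \<le> Z" for m
  proof -
    have "norm (q powr barnes_arg x r w m) \<le> K * norm q powr 0"
      using pbT[of 0 m] Snn[of m] x by simp
    then have "norm (q powr barnes_arg x r w m) \<le> K" using nq by simp
    then have "norm (1 - q powr barnes_arg x r w m) \<le> 1 + K"
      using norm_triangle_ineq4[of 1 "q powr barnes_arg x r w m"] by simp
    then show ?thesis unfolding zeq Z_def using q1 by (simp add: divide_right_mono)
  qed
  define T where "T = \<bar>ln (2 * K)\<bar> / (- ln (norm q))"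
  have lnq: "ln (norm q) < 0" using q nq by simp
  have "norm q powr T = exp (- \<bar>ln (2 * K)\<bar>)"
    using nq lnq by (simp add: powr_def T_def)
  also have "\<dots> \<le> exp (- ln (2 * K))" by simp
  also have "\<dots> = 1 / (2 * K)" using K by (simp only: exp_minus exp_ln[of "2 * K"] inverse_eq_divide)
  finally have KT: "K * norm q powr T \<le> 1 / 2" using K by (simp add: field_simps)
  define Ex where "Ex = {m \<in> M. S m < T}"
  have "Ex \<subseteq> PiE {..<r} (\<lambda>j. {..nat \<lceil>T / w j\<rceil>})"
  proof
    fix m assume m: "m \<in> Ex"
    have "m j \<le> nat \<lceil>T / w j\<rceil>" if j: "j < r" for j
    proof -
      have "w j * real (m j) \<le> S m"
        unfolding S_def using j w by (intro member_le_sum) auto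
      also have "\<dots> < T" using m by (simp add: Ex_def)
      finally have "real (m j) < T / w j" using w j by (simp add: pos_less_divide_eq mult.commute)
      then show ?thesis by linarith
    qed
    moreover have "m \<in> multi_idx r" using m by (simp add: Ex_def M_def)
    ultimately show "m \<in> PiE {..<r} (\<lambda>j. {..nat \<lceil>T / w j\<rceil>})"
      by (auto simp: multi_idx_def PiE_iff)
  qed
  then have finEx: "finite Ex" by (rule finite_subset) (simp add: finite_PiE)
  define d where "d = Min (insert (1 / (2 * norm (1 - q))) ((\<lambda>m. norm (z m)) ` Ex))"
  have "d > 0"
    unfolding d_def using finEx q1 nz by (subst Min_gr_iff) (auto simp: Ex_def M_def z_def)
  moreover have "d \<le> norm (z m)" if m: "m \<in> M" for m
  proof (cases "m \<in> Ex")
    case True then show ?thesis unfolding d_def using finEx by (intro Min_le) auto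
  next
    case False
    then have "T \<le> Re x + S m" using m x by (auto simp: Ex_def)
    then have "norm (q powr barnes_arg x r w m) \<le> 1/2" using pbT KT by fastforce
    then have "norm (1 - q powr barnes_arg x r w m) \<ge> 1/2"
      using norm_triangle_ineq2[of 1 "q powr barnes_arg x r w m"] by simp
    then have "1 / (2 * norm (1 - q)) \<le> norm (z m)"
      unfolding zeq using q1 by (simp add: field_simps)
    moreover have "d \<le> 1 / (2 * norm (1 - q))" unfolding d_def using finEx by (intro Min_le) auto
    ultimately show ?thesis by linarith
  qed
  ultimately show ?thesis using that[of d Z] up by (auto simp: z_def M_def)
qed

theorem theorem8:
  fixes q x :: complex and r f n :: nat and w :: "nat \<Rightarrow> real" and a :: "nat \<Rightarrow> complex"
    and chi :: "nat \<Rightarrow> complex" and E :: "nat \<Rightarrow> complex" and L :: "complex \<Rightarrow> complex"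
    and S :: "complex set"
  assumes q: "norm q < 1" "q \<noteq> 0"
    and w: "\<forall>j<r. w j > 0"
    and x: "Re x > 0"
    and conv: "\<forall>j<r. norm (q powr a j) < 1"
    and nz: "\<forall>m\<in>multi_idx r. qint q (barnes_arg x r w m) \<noteq> 0"
    and hchi: "dirichlet_character f chi" "conductor f chi = f" "odd f"
    and E: "\<forall>\<^sub>F t in nhds 0. (\<lambda>k. E k * t ^ k / fact k) sums barnes_gen q chi r w a x t"
    and L: "L holomorphic_on UNIV" "open S" "S \<noteq> {}"
           "\<forall>s\<in>S. L s = barnes_l_series q chi r w a x s"
  shows "L (- of_nat n) = E n"
proof -
  define M where "M = multi_idx r"
  define c where "c = barnes_coeff q chi r a"
  define z where "z m = qint q (barnes_arg x r w m)" for m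
  have cs: "(\<lambda>m. norm (c m)) summable_on M"
    unfolding c_def M_def by (rule coeff_summable[OF q(2) conv hchi(1)])
  obtain Z d where d: "d > 0" and zb: "\<forall>m\<in>M. d \<le> norm (z m) \<and> norm (z m) \<le> Z"
    using z_bounds[OF q w x nz] unfolding M_def z_def by blast
  define b where "b k = infsum (\<lambda>m. c m * z m ^ k) M" for k
  have gen: "(\<lambda>k. b k / fact k * t ^ k) sums barnes_gen q chi r w a x t" for t
    using core[OF cs, of z Z t] zb unfolding barnes_gen_def b_def c_def z_def M_def
    by (simp add: field_simps)
  have "E n / fact n = b n / fact n"
  proof (rule powser_unique[where g = "barnes_gen q chi r w a x"])
    show "\<forall>\<^sub>F t in nhds 0. (\<lambda>k. E k / fact k * t ^ k) sums barnes_gen q chi r w a x t"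
      using E by eventually_elim (simp add: field_simps)
  qed (rule gen)
  then have Eb: "E n = b n" by simp
  have znz: "z m \<noteq> 0" if "m \<in> M" for m using nz that by (simp add: z_def M_def)
  define u where "u m = - Ln (z m)" for m
  have ub: "\<forall>m\<in>M. norm (u m) \<le> \<bar>ln d\<bar> + \<bar>ln Z\<bar> + pi"
    using norm_Ln_bound znz zb d unfolding u_def by auto
  define Fs where "Fs s = infsum (\<lambda>m. c m * exp (u m * s)) M" for s
  define b' where "b' k = infsum (\<lambda>m. c m * u m ^ k) M" for k
  have Fsum: "(\<lambda>k. b' k / fact k * (s - 0) ^ k) sums Fs s" for s
    using core[OF cs ub, of s] unfolding Fs_def b'_def by (simp add: field_simps)
  have holb: "Fs holomorphic_on ball 0 R" for R
    by (rule power_series_holomorphic) (rule Fsum)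
  have hol: "Fs holomorphic_on UNIV"
    unfolding holomorphic_on_def
  proof
    fix s :: complex
    have "Fs field_differentiable at s"
      by (rule holomorphic_on_imp_differentiable_at[OF holb[of "norm s + 1"]]) auto
    then show "Fs field_differentiable at s within UNIV" by simp
  qed
  have LF: "L s = Fs s" if "s \<in> S" for s
  proof -
    have "L s = barnes_l_series q chi r w a x s" using L(4) that by simp
    also have "\<dots> = Fs s"
      unfolding barnes_l_series_def Fs_def M_def
    proof (rule infsum_cong)
      fix m assume "m \<in> multi_idx r"
      then have "z m \<noteq> 0" using znz by (simp add: M_def)
      then show "barnes_coeff q chi r a m / qint q (barnes_arg x r w m) powr s = c m * exp (u m * s)"
        by (simp add: c_def z_def[symmetric] u_def powr_def exp_minus divide_inverse mult.commute)
    qed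
    finally show ?thesis .
  qed
  have "L (- of_nat n) = Fs (- of_nat n)"
    by (rule analytic_continuation_open[of S UNIV L Fs]) (use L hol LF in auto)
  also have "\<dots> = b n"
    unfolding Fs_def b_def
  proof (rule infsum_cong)
    fix m assume "m \<in> M"
    then have "z m \<noteq> 0" using znz by simp
    then show "c m * exp (u m * - of_nat n) = c m * z m ^ n"
      by (simp add: u_def exp_of_nat_mult exp_Ln exp_of_nat2_mult)
  qed
  finally show ?thesis using Eb by simp
qed

end
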